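(* An ordered GIFS $(\mathcal A,\Gamma,(g_\gamma)_{\gamma\in\Gamma},\prec)$ is a linear GIFS if and only if it satisfies the chain condition.
   Context: A graph-directed iterated function system (GIFS) consists of a finite directed graph $(\mathcal A,\Gamma)$ with vertex set $\mathcal A=\{1,\dots,N\}$ and finite edge set $\Gamma$ (loops and multiple edges allowed), in which every vertex has at least one outgoing edge, together with contracting similitudes $g_\gamma:\mathbb R^d\to\mathbb R^d$, $\gamma\in\Gamma$. Let $\Gamma_{ij}$ be the set of edges from $i$ to $j$ and $\Gamma_i$ the set of edges starting at $i$; $t(\gamma)$ is the terminal vertex of an edge or path $\gamma$. The invariant sets are the unique nonempty compact sets $E_1,\dots,E_N$ with $E_i=\bigcup_{j}\bigcup_{\gamma\in\Gamma_{ij}}g_\gamma(E_j)$. A path is a sequence of edges $\omega_1\omega_2\cdots$ such that the terminal vertex of $\omega_m$ is the initial vertex of $\omega_{m+1}$; $\Gamma_i^k$ (resp. $\Gamma_i^\infty$) denotes the set of paths of length $k$ (resp. infinite paths) starting at $i$, and $\omega|_n$ is the prefix of length $n$. For a finite path $\gamma=\gamma_1\dots\gamma_n$, put $g_\gamma=g_{\gamma_1}\circ\cdots\circ g_{\gamma_n}$ and $E_\gamma=g_\gamma(E_{t(\gamma)})$. The projection $\pi_i:\Gamma_i^\infty\to E_i$ is given by $\{\pi_i(\omega)\}=\bigcap_{n\ge1}E_{\omega|_n}$. An ordered GIFS is a GIFS together with a partial order $\prec$ on $\Gamma$ whose restriction to each $\Gamma_i$ is a linear order, and such that edges in $\Gamma_i$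 and $\Gamma_j$ are incomparable for $i\neq j$. It induces the dictionary order on each $\Gamma_i^k$: $\gamma_1\dots\gamma_k\prec\omega_1\dots\omega_k$ iff for some $\ell$, $\gamma_1\dots\gamma_{\ell-1}=\omega_1\dots\omega_{\ell-1}$ and $\gamma_\ell\prec\omega_\ell$. Two paths of $\Gamma_i^k$ (or two edges of $\Gamma_i$) are adjacent if they are consecutive in this linear order. The ordered GIFS is a linear GIFS if $E_\gamma\cap E_\omega\neq\emptyset$ for all $i$, $k\ge1$ and all adjacent $\gamma,\omega\in\Gamma_i^k$. The lowest path of $\Gamma_i^\infty$ is the infinite path $\omega\in\Gamma_i^\infty$ such that $\omega|_n$ is the smallest element of $\Gamma_i^n$ for every $n$; its image $\pi_i(\omega)$ is the head of $E_i$. Similarly the highest path $\omega'$ has $\omega'|_n$ the largest element of $\Gamma_i^n$ for all $n$, and $\pi_i(\omega')$ is the tail of $E_i$. The ordered GIFS satisfies the chain condition if for every $i\in\mathcal A$ and every two adjacent edges $\omega,\gamma\in\Gamma_i$ with $\omega\prec\gamma$, $g_\omega(\text{tail of }E_{t(\omega)})=g_\gamma(\text{head of }E_{t(\gamma)})$. *)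

theory Defs
  imports "HOL-Analysis.Analysis"
begin

definition contracting_similitude :: "('a::metric_space \<Rightarrow> 'a) \<Rightarrow> bool" where
  "contracting_similitude f \<longleftrightarrow>
     (\<exists>r. 0 < r \<and> r < 1 \<and> (\<forall>x y. dist (f x) (f y) = r * dist x y))"

definition gifs :: "'v set \<Rightarrow> 'e set \<Rightarrow> ('e \<Rightarrow> 'v) \<Rightarrow> ('e \<Rightarrow> 'v)
                    \<Rightarrow> ('e \<Rightarrow> 'a::metric_space \<Rightarrow> 'a) \<Rightarrow> bool" where
  "gifs V G s t g \<longleftrightarrow> finite V \<and> finite G
     \<and> (\<forall>e\<in>G. s e \<in> V \<and> t e \<in> V)
     \<and> (\<forall>i\<in>V. \<exists>e\<in>G. s e = i)
     \<and> (\<forall>e\<in>G. contracting_similitude (g e))"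

definition invariant_sets :: "'v set \<Rightarrow> 'e set \<Rightarrow> ('e \<Rightarrow> 'v) \<Rightarrow> ('e \<Rightarrow> 'v)
                    \<Rightarrow> ('e \<Rightarrow> 'a::metric_space \<Rightarrow> 'a) \<Rightarrow> ('v \<Rightarrow> 'a set) \<Rightarrow> bool" where
  "invariant_sets V G s t g E \<longleftrightarrow>
     (\<forall>i\<in>V. E i \<noteq> {} \<and> compact (E i)
        \<and> E i = (\<Union>e\<in>{e\<in>G. s e = i}. g e ` E (t e)))"

definition ordered :: "'v set \<Rightarrow> 'e set \<Rightarrow> ('e \<Rightarrow> 'v) \<Rightarrow> ('e \<Rightarrow> 'e \<Rightarrow> bool) \<Rightarrow> bool" where
  "ordered V G s prec \<longleftrightarrow>
     (\<forall>a b. prec a b \<longrightarrow> a \<in> G \<and> b \<in> G \<and> s a = s b)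
     \<and> (\<forall>a\<in>G. \<not> prec a a)
     \<and> (\<forall>a b c. prec a b \<and> prec b c \<longrightarrow> prec a c)
     \<and> (\<forall>a\<in>G. \<forall>b\<in>G. s a = s b \<and> a \<noteq> b \<longrightarrow> prec a b \<or> prec b a)"

definition paths :: "('e \<Rightarrow> 'v) \<Rightarrow> ('e \<Rightarrow> 'v) \<Rightarrow> 'e set \<Rightarrow> 'v \<Rightarrow> nat \<Rightarrow> 'e list set" where
  "paths s t G i k = {p. length p = k \<and> set p \<subseteq> G \<and> (k > 0 \<longrightarrow> s (hd p) = i)
       \<and> (\<forall>m. Suc m < k \<longrightarrow> t (p ! m) = s (p ! Suc m))}"

definition ipaths :: "('e \<Rightarrow> 'v) \<Rightarrow> ('e \<Rightarrow> 'v) \<Rightarrow> 'e set \<Rightarrow> 'v \<Rightarrow> (nat \<Rightarrow> 'e) set" where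
  "ipaths s t G i = {w. (\<forall>m. w m \<in> G) \<and> s (w 0) = i \<and> (\<forall>m. t (w m) = s (w (Suc m)))}"

definition pref :: "(nat \<Rightarrow> 'e) \<Rightarrow> nat \<Rightarrow> 'e list" where
  "pref w n = map w [0..<n]"

definition gcomp :: "('e \<Rightarrow> 'a \<Rightarrow> 'a) \<Rightarrow> 'e list \<Rightarrow> 'a \<Rightarrow> 'a" where
  "gcomp g p = foldr (\<lambda>e f. g e \<circ> f) p id"

definition cyl :: "('e \<Rightarrow> 'a \<Rightarrow> 'a) \<Rightarrow> ('e \<Rightarrow> 'v) \<Rightarrow> ('v \<Rightarrow> 'a set) \<Rightarrow> 'e list \<Rightarrow> 'a set" where
  "cyl g t E p = gcomp g p ` E (t (last p))"

definition dict :: "('e \<Rightarrow> 'e \<Rightarrow> bool) \<Rightarrow> nat \<Rightarrow> 'e list \<Rightarrow> 'e list \<Rightarrow> bool" where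
  "dict prec k p q \<longleftrightarrow> (\<exists>l<k. take l p = take l q \<and> prec (p ! l) (q ! l))"

definition adjacent :: "('x \<Rightarrow> 'x \<Rightarrow> bool) \<Rightarrow> 'x set \<Rightarrow> 'x \<Rightarrow> 'x \<Rightarrow> bool" where
  "adjacent R S p q \<longleftrightarrow> p \<in> S \<and> q \<in> S \<and> R p q \<and> \<not> (\<exists>r\<in>S. R p r \<and> R r q)"

definition linear_gifs :: "'v set \<Rightarrow> 'e set \<Rightarrow> ('e \<Rightarrow> 'v) \<Rightarrow> ('e \<Rightarrow> 'v)
      \<Rightarrow> ('e \<Rightarrow> 'a \<Rightarrow> 'a) \<Rightarrow> ('v \<Rightarrow> 'a set) \<Rightarrow> ('e \<Rightarrow> 'e \<Rightarrow> bool) \<Rightarrow> bool" where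
  "linear_gifs V G s t g E prec \<longleftrightarrow>
     (\<forall>i\<in>V. \<forall>k\<ge>1. \<forall>p q. adjacent (dict prec k) (paths s t G i k) p q
         \<longrightarrow> cyl g t E p \<inter> cyl g t E q \<noteq> {})"

definition proj :: "('e \<Rightarrow> 'a \<Rightarrow> 'a) \<Rightarrow> ('e \<Rightarrow> 'v) \<Rightarrow> ('v \<Rightarrow> 'a set) \<Rightarrow> (nat \<Rightarrow> 'e) \<Rightarrow> 'a" where
  "proj g t E w = (THE x. (\<Inter>n\<in>{1..}. cyl g t E (pref w n)) = {x})"

definition lowest_path :: "('e \<Rightarrow> 'v) \<Rightarrow> ('e \<Rightarrow> 'v) \<Rightarrow> 'e set \<Rightarrow> ('e \<Rightarrow> 'e \<Rightarrow> bool)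
      \<Rightarrow> 'v \<Rightarrow> (nat \<Rightarrow> 'e) \<Rightarrow> bool" where
  "lowest_path s t G prec i w \<longleftrightarrow> w \<in> ipaths s t G i \<and>
     (\<forall>n\<ge>1. \<forall>p\<in>paths s t G i n. p \<noteq> pref w n \<longrightarrow> dict prec n (pref w n) p)"

definition highest_path :: "('e \<Rightarrow> 'v) \<Rightarrow> ('e \<Rightarrow> 'v) \<Rightarrow> 'e set \<Rightarrow> ('e \<Rightarrow> 'e \<Rightarrow> bool)
      \<Rightarrow> 'v \<Rightarrow> (nat \<Rightarrow> 'e) \<Rightarrow> bool" where
  "highest_path s t G prec i w \<longleftrightarrow> w \<in> ipaths s t G i \<and>
     (\<forall>n\<ge>1. \<forall>p\<in>paths s t G i n. p \<noteq> pref w n \<longrightarrow> dict prec n p (pref w n))"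

definition head :: "'e set \<Rightarrow> ('e \<Rightarrow> 'v) \<Rightarrow> ('e \<Rightarrow> 'v) \<Rightarrow> ('e \<Rightarrow> 'a \<Rightarrow> 'a) \<Rightarrow> ('v \<Rightarrow> 'a set)
      \<Rightarrow> ('e \<Rightarrow> 'e \<Rightarrow> bool) \<Rightarrow> 'v \<Rightarrow> 'a" where
  "head G s t g E prec i = proj g t E (THE w. lowest_path s t G prec i w)"

definition tail :: "'e set \<Rightarrow> ('e \<Rightarrow> 'v) \<Rightarrow> ('e \<Rightarrow> 'v) \<Rightarrow> ('e \<Rightarrow> 'a \<Rightarrow> 'a) \<Rightarrow> ('v \<Rightarrow> 'a set)
      \<Rightarrow> ('e \<Rightarrow> 'e \<Rightarrow> bool) \<Rightarrow> 'v \<Rightarrow> 'a" where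
  "tail G s t g E prec i = proj g t E (THE w. highest_path s t G prec i w)"

definition chain_condition :: "'v set \<Rightarrow> 'e set \<Rightarrow> ('e \<Rightarrow> 'v) \<Rightarrow> ('e \<Rightarrow> 'v)
      \<Rightarrow> ('e \<Rightarrow> 'a \<Rightarrow> 'a) \<Rightarrow> ('v \<Rightarrow> 'a set) \<Rightarrow> ('e \<Rightarrow> 'e \<Rightarrow> bool) \<Rightarrow> bool" where
  "chain_condition V G s t g E prec \<longleftrightarrow>
     (\<forall>i\<in>V. \<forall>a b. adjacent prec {e\<in>G. s e = i} a b
        \<longrightarrow> g a (tail G s t g E prec (t a)) = g b (head G s t g E prec (t b)))"

end

theory Submission imports Defs begin

lemma gcomp_Nil[simp]: "gcomp g [] = id" by (simp add: gcomp_def)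
lemma gcomp_Cons[simp]: "gcomp g (e#p) = g e \<circ> gcomp g p" by (simp add: gcomp_def)
lemma gcomp_append: "gcomp g (p@q) = gcomp g p \<circ> gcomp g q"
  by (induct p) auto

lemma pref_Suc: "pref w (Suc n) = pref w n @ [w n]" by (simp add: pref_def)
lemma length_pref[simp]: "length (pref w n) = n" by (simp add: pref_def)
lemma nth_pref[simp]: "j < n \<Longrightarrow> pref w n ! j = w j" by (simp add: pref_def)

lemma pathsD:
  assumes "p \<in> paths s t G i k"
  shows "length p = k" "set p \<subseteq> G" "k > 0 \<Longrightarrow> s (hd p) = i"
    "Suc m < k \<Longrightarrow> t (p ! m) = s (p ! Suc m)"
  using assms unfolding paths_def mem_Collect_eq by blast+

lemma pathsI:
  assumes "length p = k" "set p \<subseteq> G" "k > 0 \<Longrightarrow> s (hd p) = i"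
    "\<And>m. Suc m < k \<Longrightarrow> t (p ! m) = s (p ! Suc m)"
  shows "p \<in> paths s t G i k"
  using assms unfolding paths_def mem_Collect_eq by blast

lemma pref_paths: "w \<in> ipaths s t G i \<Longrightarrow> pref w n \<in> paths s t G i n"
proof -
  assume w: "w \<in> ipaths s t G i"
  have "set (pref w n) \<subseteq> G" using w by (auto simp: ipaths_def pref_def)
  moreover have "n > 0 \<longrightarrow> s (hd (pref w n)) = i" using w by (auto simp: ipaths_def pref_def hd_map)
  moreover have "\<forall>m. Suc m < n \<longrightarrow> t (pref w n ! m) = s (pref w n ! Suc m)" using w by (auto simp: ipaths_def)
  ultimately show ?thesis by (intro pathsI) auto
qed

lemma paths_append:
  assumes "p \<in> paths s t G i k1" "q \<in> paths s t G j k2" "k1 > 0" "k2 > 0" "t (last p) = j"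
  shows "p @ q \<in> paths s t G i (k1 + k2)"
proof -
  have lp: "length p = k1" "length q = k2" using pathsD(1)[OF assms(1)] pathsD(1)[OF assms(2)] by auto
  have "t ((p@q) ! m) = s ((p@q) ! Suc m)" if "Suc m < k1 + k2" for m
  proof (cases "Suc m < k1")
    case True
    have "t (p ! m) = s (p ! Suc m)" using pathsD(4)[OF assms(1) True] .
    then show ?thesis using True lp by (simp add: nth_append)
  next
    case False
    show ?thesis
    proof (cases "Suc m = k1")
      case True
      have pn: "p \<noteq> []" "q \<noteq> []" using lp assms(3,4) by auto
      have "last p = p ! (length p - 1)" using pn by (simp add: last_conv_nth)
      moreover have "length p - 1 = m" using lp True by simp
      ultimately have "p ! m = last p" by simp
      moreover have "s (hd q) = j" using pathsD(3)[OF assms(2,4)] .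
      then have "s (q ! 0) = j" using pn by (simp add: hd_conv_nth)
      ultimately show ?thesis using True lp assms(5) by (simp add: nth_append)
    next
      case False2: False
      have ge: "k1 \<le> m" using False False2 by simp
      have "Suc (m - k1) < k2" using ge that by simp
      then have "t (q ! (m - k1)) = s (q ! Suc (m - k1))" by (rule pathsD(4)[OF assms(2)])
      moreover have "Suc m - k1 = Suc (m - k1)" using ge by simp
      ultimately show ?thesis using ge lp by (simp add: nth_append)
    qed
  qed
  note nthf = this
  have setf: "set (p @ q) \<subseteq> G" using pathsD(2)[OF assms(1)] pathsD(2)[OF assms(2)] by simp
  have "p \<noteq> []" using lp assms(3) by auto
  then have hdf: "s (hd (p @ q)) = i" using pathsD(3)[OF assms(1) assms(3)] by simp
  have lf: "length (p @ q) = k1 + k2" using lp by simp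
  show ?thesis using nthf setf hdf lf by (intro pathsI) auto
qed

lemma single_paths: "c \<in> G \<Longrightarrow> [c] \<in> paths s t G (s c) 1"
  by (rule pathsI) auto

lemma take_paths: assumes "p \<in> paths s t G i k" "l \<le> k" shows "take l p \<in> paths s t G i l"
proof (rule pathsI)
  note D = pathsD[OF assms(1)]
  show "length (take l p) = l" using D(1) assms(2) by simp
  show "set (take l p) \<subseteq> G" using set_take_subset[of l p] D(2) by (rule order_trans)
  show "s (hd (take l p)) = i" if "l > 0"
  proof -
    have "p \<noteq> []" using D(1) that assms(2) by auto
    then have "hd (take l p) = hd p" using that by (simp add: hd_take)
    then show ?thesis using D(3) D(1) that assms(2) by simp
  qed
  show "t (take l p ! m) = s (take l p ! Suc m)" if "Suc m < l" for m
    using D(4)[of m] that assms(2) by simp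
qed

lemma drop_paths: assumes "p \<in> paths s t G i k" "l < k" shows "drop l p \<in> paths s t G (s (p ! l)) (k - l)"
proof (rule pathsI)
  note D = pathsD[OF assms(1)]
  show "length (drop l p) = k - l" using D(1) by simp
  show "set (drop l p) \<subseteq> G" using set_drop_subset[of l p] D(2) by (rule order_trans)
  show "s (hd (drop l p)) = s (p ! l)" using D(1) assms(2) by (simp add: hd_drop_conv_nth)
  show "t (drop l p ! m) = s (drop l p ! Suc m)" if "Suc m < k - l" for m
  proof -
    have "Suc (l + m) < k" using that by simp
    then have "t (p ! (l + m)) = s (p ! Suc (l + m))" by (rule D(4))
    then show ?thesis using D(1) that by simp
  qed
qed

lemma paths_Cons: "a # q \<in> paths s t G i (Suc m) \<longleftrightarrow> a \<in> G \<and> s a = i \<and> (m > 0 \<longrightarrow> q \<in> paths s t G (t a) m) \<and> length q = m"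
proof
  assume h: "a # q \<in> paths s t G i (Suc m)"
  note hD = pathsD[OF h]
  have L: "length q = m" "set q \<subseteq> G" "a \<in> G" "s a = i" using hD(1,2) hD(3) by auto
  have "q \<in> paths s t G (t a) m" if "m > 0"
  proof (rule pathsI)
    show "t (q ! j) = s (q ! Suc j)" if "Suc j < m" for j
      using hD(4)[of "Suc j"] that by simp
    have "t ((a#q) ! 0) = s ((a#q) ! 1)" using hD(4)[of 0] \<open>m>0\<close> by simp
    then show "s (hd q) = t a" using L \<open>m>0\<close> by (cases q) auto
  qed (use L in auto)
  then show "a \<in> G \<and> s a = i \<and> (m > 0 \<longrightarrow> q \<in> paths s t G (t a) m) \<and> length q = m"
    using L by blast
next
  assume h: "a \<in> G \<and> s a = i \<and> (m > 0 \<longrightarrow> q \<in> paths s t G (t a) m) \<and> length q = m"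
  show "a # q \<in> paths s t G i (Suc m)"
  proof (cases "m = 0")
    case True then have "q = []" using h by auto
    then show ?thesis using h True by (intro pathsI) auto
  next
    case False
    then have "[a] \<in> paths s t G i 1" "q \<in> paths s t G (t a) m" using h single_paths[of a G s t] by auto
    then have "[a] @ q \<in> paths s t G i (1 + m)" by (rule paths_append) (use False h in auto)
    then show ?thesis by simp
  qed
qed


locale gctx =
  fixes V :: "'v set" and G :: "'e set" and s t :: "'e \<Rightarrow> 'v"
    and g :: "'e \<Rightarrow> 'a::euclidean_space \<Rightarrow> 'a" and E :: "'v \<Rightarrow> 'a set"
  assumes gifs: "gifs V G s t g" and inv: "invariant_sets V G s t g E"
begin

lemma finV: "finite V" and finG: "finite G" using gifs by (auto simp: gifs_def)

lemma edgeV: "e \<in> G \<Longrightarrow> s e \<in> V" "e \<in> G \<Longrightarrow> t e \<in> V" using gifs by (auto simp: gifs_def)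

lemma out_edge: "i \<in> V \<Longrightarrow> \<exists>e\<in>G. s e = i" using gifs by (auto simp: gifs_def)

lemma E_ne: "i \<in> V \<Longrightarrow> E i \<noteq> {}" and E_compact: "i \<in> V \<Longrightarrow> compact (E i)"
  using inv by (auto simp: invariant_sets_def)

lemma E_eq: "i \<in> V \<Longrightarrow> E i = (\<Union>e\<in>{e\<in>G. s e = i}. g e ` E (t e))"
  using inv by (auto simp: invariant_sets_def)

lemma E_sub: "e \<in> G \<Longrightarrow> g e ` E (t e) \<subseteq> E (s e)"
  using E_eq[OF edgeV(1)] by blast

lemma ratio: "\<exists>r. 0 < r \<and> r < 1 \<and> (\<forall>e\<in>G. \<forall>x y. dist (g e x) (g e y) \<le> r * dist x y)"
proof -
  have "\<forall>e\<in>G. \<exists>r. 0 < r \<and> r < 1 \<and> (\<forall>x y. dist (g e x) (g e y) = r * dist x y)"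
    using gifs by (auto simp: gifs_def contracting_similitude_def)
  then obtain f where f: "\<forall>e\<in>G. 0 < f e \<and> f e < 1 \<and> (\<forall>x y. dist (g e x) (g e y) = f e * dist x y)"
    by (rule bchoice[elim_format]) blast
  define r where "r = Max (insert (1/2) (f ` G))"
  have fin: "finite (insert (1/2) (f ` G))" using finG by simp
  have "r \<ge> 1/2" unfolding r_def using fin by (rule Max_ge) simp
  moreover have "r < 1" unfolding r_def using fin f by (subst Max_less_iff) auto
  moreover have "f e \<le> r" if "e \<in> G" for e unfolding r_def using fin that by (intro Max_ge) auto
  ultimately show ?thesis using f
    by (intro exI[of _ r]) (auto intro!: mult_right_mono)
qed

lemma gcomp_lip:
  assumes "0 \<le> r" "\<forall>e\<in>G. \<forall>x y. dist (g e x) (g e y) \<le> r * dist x y"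
  shows "set p \<subseteq> G \<Longrightarrow> dist (gcomp g p x) (gcomp g p y) \<le> r ^ length p * dist x y"
proof (induct p)
  case Nil then show ?case by simp
next
  case (Cons e p)
  have "dist (gcomp g (e#p) x) (gcomp g (e#p) y) = dist (g e (gcomp g p x)) (g e (gcomp g p y))" by simp
  also have "\<dots> \<le> r * dist (gcomp g p x) (gcomp g p y)" using assms(2) Cons.prems by auto
  also have "\<dots> \<le> r * (r ^ length p * dist x y)" using Cons assms(1) by (auto intro: mult_left_mono)
  finally show ?case by (simp add: mult.assoc)
qed

lemma gcomp_cont:
  assumes "set p \<subseteq> G" shows "continuous_on UNIV (gcomp g p)"
proof -
  obtain r where r: "0 < r" "r < 1" "\<forall>e\<in>G. \<forall>x y. dist (g e x) (g e y) \<le> r * dist x y"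
    using ratio by blast
  have "(r ^ length p)-lipschitz_on UNIV (gcomp g p)"
    using gcomp_lip[OF _ r(3) assms] r(1) by (intro lipschitz_onI) auto
  then show ?thesis by (rule lipschitz_on_continuous_on)
qed

lemma diamE: "\<exists>D. 0 \<le> D \<and> (\<forall>v\<in>V. \<forall>x\<in>E v. \<forall>y\<in>E v. dist x y \<le> D)"
proof -
  have "compact (\<Union>v\<in>V. E v)" using finV E_compact by (intro compact_UN) auto
  then have "bounded (\<Union>v\<in>V. E v)" by (rule compact_imp_bounded)
  then obtain D where D: "\<forall>x\<in>(\<Union>v\<in>V. E v). \<forall>y\<in>(\<Union>v\<in>V. E v). dist x y \<le> D"
    unfolding bounded_two_points by blast
  show ?thesis
    by (rule exI[of _ "max D 0"]) (use D in force)
qed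


lemma cyl_Cons: "q \<noteq> [] \<Longrightarrow> cyl g t E (a # q) = g a ` cyl g t E q"
  by (simp add: cyl_def image_comp)

lemma cyl_append: "q \<noteq> [] \<Longrightarrow> cyl g t E (p @ q) = gcomp g p ` cyl g t E q"
  by (simp add: cyl_def gcomp_append image_comp)

lemma cyl_snoc_sub: "p \<noteq> [] \<Longrightarrow> e \<in> G \<Longrightarrow> s e = t (last p) \<Longrightarrow> cyl g t E (p @ [e]) \<subseteq> cyl g t E p"
  using E_sub[of e] by (auto simp: cyl_def gcomp_append)

lemma paths_last: "p \<in> paths s t G i k \<Longrightarrow> k > 0 \<Longrightarrow> last p \<in> G \<and> t (last p) \<in> V"
proof -
  assume "p \<in> paths s t G i k" "k > 0"
  then have "p \<noteq> []" "set p \<subseteq> G" using pathsD(1,2) by fastforce+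
  then have "last p \<in> G" using last_in_set by blast
  then show ?thesis using edgeV by blast
qed

lemma cyl_compact: "p \<in> paths s t G i k \<Longrightarrow> k > 0 \<Longrightarrow> compact (cyl g t E p)"
  unfolding cyl_def
  by (rule compact_continuous_image) (auto intro: continuous_on_subset[OF gcomp_cont] E_compact dest: paths_last pathsD(2))

lemma cyl_ne: "p \<in> paths s t G i k \<Longrightarrow> k > 0 \<Longrightarrow> cyl g t E p \<noteq> {}"
  unfolding cyl_def using E_ne paths_last by blast

lemma cyl_diam:
  assumes r: "0 < r" "\<forall>e\<in>G. \<forall>x y. dist (g e x) (g e y) \<le> r * dist x y"
    and D: "\<forall>v\<in>V. \<forall>x\<in>E v. \<forall>y\<in>E v. dist x y \<le> D"
    and p: "p \<in> paths s t G i k" "k > 0" and xy: "x \<in> cyl g t E p" "y \<in> cyl g t E p"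
  shows "dist x y \<le> r ^ k * D"
proof -
  obtain x0 y0 where x0: "x0 \<in> E (t (last p))" "x = gcomp g p x0" and y0: "y0 \<in> E (t (last p))" "y = gcomp g p y0"
    using xy by (auto simp: cyl_def)
  have "dist x y \<le> r ^ length p * dist x0 y0"
    using gcomp_lip[OF _ r(2) pathsD(2)[OF p(1)]] r(1) x0 y0 by simp
  also have "\<dots> \<le> r ^ length p * D" using D paths_last[OF p] x0 y0 r(1) by (intro mult_left_mono) auto
  finally show ?thesis using pathsD(1)[OF p(1)] by simp
qed

lemma ipathsD: "w \<in> ipaths s t G i \<Longrightarrow> w m \<in> G" "w \<in> ipaths s t G i \<Longrightarrow> s (w 0) = i"
   "w \<in> ipaths s t G i \<Longrightarrow> t (w m) = s (w (Suc m))"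
  by (auto simp: ipaths_def)

lemma INT_from1: "(\<Inter>n\<in>{1::nat..}. X n) = \<Inter>(range (\<lambda>n. X (Suc n)))"
proof (rule set_eqI)
  fix x show "x \<in> (\<Inter>n\<in>{1::nat..}. X n) \<longleftrightarrow> x \<in> \<Inter>(range (\<lambda>n. X (Suc n)))"
  proof
    assume "x \<in> (\<Inter>n\<in>{1::nat..}. X n)" then show "x \<in> \<Inter>(range (\<lambda>n. X (Suc n)))" by auto
  next
    assume h: "x \<in> \<Inter>(range (\<lambda>n. X (Suc n)))"
    show "x \<in> (\<Inter>n\<in>{1::nat..}. X n)"
    proof
      fix n :: nat assume "n \<in> {1..}"
      then have "n = Suc (n - 1)" by simp
      then show "x \<in> X n" using h by (metis INT_iff UNIV_I)
    qed
  qed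
qed

lemma proj_in:
  assumes w: "w \<in> ipaths s t G i" and n: "n \<ge> 1"
  shows "proj g t E w \<in> cyl g t E (pref w n)"
proof -
  define S where "S m = cyl g t E (pref w (Suc m))" for m
  have P: "pref w (Suc m) \<in> paths s t G i (Suc m)" for m using pref_paths[OF w] .
  have cl: "closed (S m)" for m unfolding S_def using cyl_compact[OF P] by (simp add: compact_imp_closed)
  have ne: "S m \<noteq> {}" for m unfolding S_def using cyl_ne[OF P] by simp
  have step: "S (Suc m) \<subseteq> S m" for m
    unfolding S_def using cyl_snoc_sub[of "pref w (Suc m)" "w (Suc m)"] ipathsD[OF w]
    by (simp add: pref_Suc[of w "Suc m"] pref_Suc[of w m])
  have nest: "S b \<subseteq> S a" if "a \<le> b" for a b
    using lift_Suc_antimono_le[of S, OF step that] .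
  obtain r where r: "0 < r" "r < 1" "\<forall>e\<in>G. \<forall>x y. dist (g e x) (g e y) \<le> r * dist x y"
    using ratio by blast
  obtain D where D: "0 \<le> D" "\<forall>v\<in>V. \<forall>x\<in>E v. \<forall>y\<in>E v. dist x y \<le> D" using diamE by blast
  have sm: "\<exists>m. \<forall>x\<in>S m. \<forall>y\<in>S m. dist x y < \<epsilon>" if eps: "\<epsilon> > 0" for \<epsilon>
  proof -
    obtain m where m: "r ^ m < \<epsilon> / (D + 1)" using real_arch_pow_inv[of "\<epsilon> / (D + 1)" r] eps r D by auto
    have "r ^ m * (D + 1) < \<epsilon>" using m D by (simp add: pos_less_divide_eq)
    moreover have "r ^ Suc m * D \<le> r ^ m * (D + 1)"
    proof -
      have "r ^ Suc m \<le> r ^ m" using r by (simp add: power_decreasing)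
      then have "r ^ Suc m * D \<le> r ^ m * D" using D(1) by (rule mult_right_mono)
      also have "\<dots> \<le> r ^ m * (D + 1)" using r by simp
      finally show ?thesis .
    qed
    moreover have "dist x y \<le> r ^ Suc m * D" if "x \<in> S m" "y \<in> S m" for x y
      using cyl_diam[OF r(1) r(3) D(2) P[of m] _ that[unfolded S_def]] by simp
    ultimately have "\<forall>x\<in>S m. \<forall>y\<in>S m. dist x y < \<epsilon>" by fastforce
    then show ?thesis by blast
  qed
  obtain a where a: "\<Inter>(range S) = {a}" using decreasing_closed_nest_sing[OF cl ne nest sm] by blast
  have "(\<Inter>m\<in>{1..}. cyl g t E (pref w m)) = {a}" using a unfolding S_def INT_from1 .
  then have pa: "proj g t E w = a" by (simp add: proj_def)
  have "a \<in> S (n - 1)" using a by blast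
  moreover have "Suc (n - 1) = n" using n by simp
  ultimately show ?thesis unfolding S_def pa by simp
qed

lemma proj_E:
  assumes w: "w \<in> ipaths s t G i"
  shows "proj g t E w \<in> E i"
proof -
  have "proj g t E w \<in> cyl g t E (pref w 1)" using proj_in[OF w] by simp
  then have "proj g t E w \<in> g (w 0) ` E (t (w 0))" by (simp add: cyl_def pref_def)
  then show ?thesis using E_sub[OF ipathsD(1)[OF w]] ipathsD(2)[OF w] by blast
qed

end


locale gord = gctx V G s t g E for V :: "'v set" and G :: "'e set" and s t :: "'e \<Rightarrow> 'v"
    and g :: "'e \<Rightarrow> 'a::euclidean_space \<Rightarrow> 'a" and E :: "'v \<Rightarrow> 'a set" +
  fixes R :: "'e \<Rightarrow> 'e \<Rightarrow> bool"
  assumes ord: "ordered V G s R"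
begin

lemma ordc: "\<forall>a b. R a b \<longrightarrow> a \<in> G \<and> b \<in> G \<and> s a = s b" "\<forall>a\<in>G. \<not> R a a"
   "\<forall>a b c. R a b \<and> R b c \<longrightarrow> R a c" "\<forall>a\<in>G. \<forall>b\<in>G. s a = s b \<and> a \<noteq> b \<longrightarrow> R a b \<or> R b a"
  using ord[unfolded ordered_def] apply -
     apply (erule conjE, assumption)
    apply (erule conjE, erule conjE, assumption)
   apply (erule conjE, erule conjE, erule conjE, assumption)
  apply (erule conjE, erule conjE, erule conjE, assumption)
  done

lemma RD: "R a b \<Longrightarrow> a \<in> G \<and> b \<in> G \<and> s a = s b" using ordc(1) by blast
lemma Rirr: "\<not> R a a"
proof
  assume "R a a" then have "a \<in> G" using RD by blast
  then show False using ordc(2) \<open>R a a\<close> by blast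
qed
lemma Rtrans: "R a b \<Longrightarrow> R b c \<Longrightarrow> R a c" using ordc(3) by blast
lemma Rtot: "a \<in> G \<Longrightarrow> b \<in> G \<Longrightarrow> s a = s b \<Longrightarrow> a \<noteq> b \<Longrightarrow> R a b \<or> R b a"
  using ordc(4) by blast
lemma Rasym: "R a b \<Longrightarrow> R b a \<Longrightarrow> False" using Rtrans Rirr by blast

lemma dict_Cons: "dict R (Suc m) (c # x) (d # y) \<longleftrightarrow> R c d \<or> (c = d \<and> dict R m x y)"
proof
  assume "dict R (Suc m) (c # x) (d # y)"
  then obtain l where l: "l < Suc m" "take l (c # x) = take l (d # y)" "R ((c # x) ! l) ((d # y) ! l)"
    unfolding dict_def by blast
  show "R c d \<or> (c = d \<and> dict R m x y)"
  proof (cases l)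
    case 0 then show ?thesis using l by simp
  next
    case (Suc l')
    then have "c = d" "take l' x = take l' y" "R (x ! l') (y ! l')" "l' < m" using l by auto
    then show ?thesis unfolding dict_def by blast
  qed
next
  assume h: "R c d \<or> (c = d \<and> dict R m x y)"
  show "dict R (Suc m) (c # x) (d # y)"
  proof (cases "R c d")
    case True then show ?thesis unfolding dict_def by (intro exI[of _ 0]) simp
  next
    case False
    then obtain l where "c = d" "l < m" "take l x = take l y" "R (x ! l) (y ! l)" using h unfolding dict_def by blast
    then show ?thesis unfolding dict_def by (intro exI[of _ "Suc l"]) simp
  qed
qed

lemma dict_append: "dict R (length u + n) (u @ x) (u @ y) \<longleftrightarrow> dict R n x y"
  by (induct u) (auto simp: dict_Cons Rirr)

lemma dict_asym: "dict R k p q \<Longrightarrow> dict R k q p \<Longrightarrow> False"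
proof -
  assume "dict R k p q" "dict R k q p"
  then obtain l1 l2 where 1: "l1 < k" "take l1 p = take l1 q" "R (p ! l1) (q ! l1)"
    and 2: "l2 < k" "take l2 q = take l2 p" "R (q ! l2) (p ! l2)" unfolding dict_def by blast
  consider "l1 < l2" | "l2 < l1" | "l1 = l2" by linarith
  then show False
  proof cases
    case 1
    then have "take l2 q ! l1 = q ! l1" "take l2 p ! l1 = p ! l1" by simp_all
    then have "p ! l1 = q ! l1" using 2(2) by simp
    then show False using \<open>R (p ! l1) (q ! l1)\<close> Rirr by simp
  next
    case 2
    then have "take l1 q ! l2 = q ! l2" "take l1 p ! l2 = p ! l2" by simp_all
    then have "p ! l2 = q ! l2" using 1(2) by simp
    then show False using \<open>R (q ! l2) (p ! l2)\<close> Rirr by simp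
  next
    case 3 then show False using 1(3) 2(3) Rasym by simp
  qed
qed

lemma dict_irr: "\<not> dict R k p p" using dict_asym by blast

lemma has_min: "finite A \<Longrightarrow> A \<noteq> {} \<Longrightarrow> A \<subseteq> {e\<in>G. s e = v} \<Longrightarrow> \<exists>m\<in>A. \<forall>x\<in>A. x \<noteq> m \<longrightarrow> R m x"
proof (induct A rule: finite_ne_induct)
  case (singleton x) then show ?case by simp
next
  case (insert x F)
  then obtain m where m: "m \<in> F" "\<forall>y\<in>F. y \<noteq> m \<longrightarrow> R m y" by auto
  have "x \<noteq> m" using m insert by auto
  then have "R x m \<or> R m x" using Rtot[of x m] insert m by auto
  then show ?case
  proof
    assume "R x m"
    then have "\<forall>y\<in>insert x F. y \<noteq> x \<longrightarrow> R x y" using m Rtrans by auto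
    then show ?thesis by blast
  next
    assume "R m x"
    then have "\<forall>y\<in>insert x F. y \<noteq> m \<longrightarrow> R m y" using m by auto
    then show ?thesis using m by blast
  qed
qed

definition mn :: "'v \<Rightarrow> 'e" where
  "mn u = (SOME e. e \<in> G \<and> s e = u \<and> (\<forall>e'\<in>G. s e' = u \<and> e' \<noteq> e \<longrightarrow> R e e'))"

lemma mn: "u \<in> V \<Longrightarrow> mn u \<in> G \<and> s (mn u) = u \<and> (\<forall>e'\<in>G. s e' = u \<and> e' \<noteq> mn u \<longrightarrow> R (mn u) e')"
proof -
  assume u: "u \<in> V"
  have "finite {e\<in>G. s e = u}" using finG by simp
  moreover have "{e\<in>G. s e = u} \<noteq> {}" using out_edge[OF u] by blast
  ultimately obtain m where "m \<in> {e\<in>G. s e = u}" "\<forall>x\<in>{e\<in>G. s e = u}. x \<noteq> m \<longrightarrow> R m x"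
    using has_min[of "{e\<in>G. s e = u}" u] by blast
  then have "\<exists>e. e \<in> G \<and> s e = u \<and> (\<forall>e'\<in>G. s e' = u \<and> e' \<noteq> e \<longrightarrow> R e e')" by auto
  then show ?thesis unfolding mn_def by (rule someI_ex)
qed

lemma lowest_exists:
  assumes v: "v \<in> V" shows "\<exists>w. lowest_path s t G R v w"
proof -
  define w where "w = rec_nat (mn v) (\<lambda>_ e. mn (t e))"
  have w0: "w 0 = mn v" and wS: "w (Suc n) = mn (t (w n))" for n by (simp_all add: w_def)
  have W: "w n \<in> G \<and> (\<forall>e'\<in>G. s e' = s (w n) \<and> e' \<noteq> w n \<longrightarrow> R (w n) e')" for n
  proof (induct n)
    case 0 then show ?case using mn[OF v] w0 by simp
  next
    case (Suc n)
    then have "t (w n) \<in> V" using edgeV by blast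
    then show ?case using mn wS by simp
  qed
  have sw0: "s (w 0) = v" using mn[OF v] w0 by simp
  have swS: "s (w (Suc n)) = t (w n)" for n using mn[of "t (w n)"] W[of n] edgeV wS by simp
  have wi: "w \<in> ipaths s t G v" unfolding ipaths_def using W sw0 swS by auto
  have "dict R n (pref w n) p" if n: "n \<ge> 1" and p: "p \<in> paths s t G v n" and ne: "p \<noteq> pref w n" for n p
  proof -
    note D = pathsD[OF p]
    have "\<exists>j<n. p ! j \<noteq> w j"
    proof (rule ccontr)
      assume "\<not> (\<exists>j<n. p ! j \<noteq> w j)"
      then have "p = pref w n" using D(1) by (intro nth_equalityI) auto
      then show False using ne by simp
    qed
    then have ex: "\<exists>j. j < n \<and> p ! j \<noteq> w j" by blast
    define l where "l = (LEAST j. j < n \<and> p ! j \<noteq> w j)"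
    have l: "l < n" "p ! l \<noteq> w l" using LeastI_ex[OF ex] unfolding l_def by blast+
    have before: "p ! j = w j" if "j < l" for j
      using not_less_Least[of j "\<lambda>j. j < n \<and> p ! j \<noteq> w j"] that l(1) unfolding l_def[symmetric] by auto
    have tk: "take l (pref w n) = take l p"
      by (rule nth_equalityI) (use l(1) D(1) before in auto)
    have pl: "p ! l \<in> G" using D(1,2) l(1) nth_mem by blast
    have spl: "s (p ! l) = s (w l)"
    proof (cases l)
      case 0
      have "s (hd p) = v" using D(3) n by simp
      moreover have "p \<noteq> []" using D(1) n by auto
      ultimately have "s (p ! 0) = v" by (simp add: hd_conv_nth)
      then show ?thesis using 0 sw0 by simp
    next
      case (Suc j)
      have "t (p ! j) = s (p ! Suc j)" using D(4)[of j] Suc l(1) by simp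
      then show ?thesis using Suc before[of j] swS[of j] by simp
    qed
    have "R (w l) (p ! l)" using W[of l] pl spl l(2) by auto
    then show ?thesis unfolding dict_def using tk l(1) by (intro exI[of _ l]) simp
  qed
  then have "lowest_path s t G R v w" unfolding lowest_path_def using wi by blast
  then show ?thesis by blast
qed

lemma lowest_unique:
  assumes "lowest_path s t G R v w1" "lowest_path s t G R v w2" shows "w1 = w2"
proof (rule ext, rule ccontr)
  fix m assume ne: "w1 m \<noteq> w2 m"
  have i: "w1 \<in> ipaths s t G v" "w2 \<in> ipaths s t G v" using assms by (auto simp: lowest_path_def)
  have "pref w1 (Suc m) \<noteq> pref w2 (Suc m)"
  proof
    assume "pref w1 (Suc m) = pref w2 (Suc m)"
    then have "pref w1 (Suc m) ! m = pref w2 (Suc m) ! m" by simp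
    then show False using ne by simp
  qed
  moreover have L1: "\<forall>n\<ge>1. \<forall>p\<in>paths s t G v n. p \<noteq> pref w1 n \<longrightarrow> dict R n (pref w1 n) p"
    and L2: "\<forall>n\<ge>1. \<forall>p\<in>paths s t G v n. p \<noteq> pref w2 n \<longrightarrow> dict R n (pref w2 n) p"
    using assms unfolding lowest_path_def by blast+
  moreover have "Suc m \<ge> 1" by simp
  moreover note pref_paths[OF i(1), of "Suc m"] pref_paths[OF i(2), of "Suc m"]
  ultimately have "dict R (Suc m) (pref w1 (Suc m)) (pref w2 (Suc m))" "dict R (Suc m) (pref w2 (Suc m)) (pref w1 (Suc m))"
    by auto
  then show False by (rule dict_asym)
qed

lemma lowest_the:
  assumes v: "v \<in> V" shows "lowest_path s t G R v (THE w. lowest_path s t G R v w)"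
proof -
  obtain w where w: "lowest_path s t G R v w" using lowest_exists[OF v] by blast
  show ?thesis using theI[of "\<lambda>w. lowest_path s t G R v w" w, OF w] lowest_unique[OF _ w] by blast
qed


lemma ord_flip: "ordered V G s (\<lambda>a b. R b a)"
proof -
  have 1: "\<forall>a b. R b a \<longrightarrow> a \<in> G \<and> b \<in> G \<and> s a = s b" using RD by metis
  have 2: "\<forall>a\<in>G. \<not> R a a" using Rirr by blast
  have 3: "\<forall>a b c. R b a \<and> R c b \<longrightarrow> R c a" using Rtrans by blast
  have 4: "\<forall>a\<in>G. \<forall>b\<in>G. s a = s b \<and> a \<noteq> b \<longrightarrow> R b a \<or> R a b" using Rtot by blast
  show ?thesis unfolding ordered_def
    by (rule conjI, fact 1, rule conjI, fact 2, rule conjI, fact 3, fact 4)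
qed

lemma gord_flip: "gord V G s t g E (\<lambda>a b. R b a)"
  unfolding gord_def gord_axioms_def using gctx_axioms ord_flip by blast

lemma dict_flip: "dict (\<lambda>a b. R b a) k p q \<longleftrightarrow> dict R k q p"
  unfolding dict_def by metis

lemma highest_eq: "highest_path s t G R v w \<longleftrightarrow> lowest_path s t G (\<lambda>a b. R b a) v w"
  unfolding highest_path_def lowest_path_def dict_flip ..

lemma highest_the: "v \<in> V \<Longrightarrow> highest_path s t G R v (THE w. highest_path s t G R v w)"
  using gord.lowest_the[OF gord_flip] unfolding highest_eq by blast

lemma tail_eq: "tail G s t g E R v = proj g t E (THE w. highest_path s t G R v w)"
  by (simp add: tail_def)
lemma head_eq: "head G s t g E R v = proj g t E (THE w. lowest_path s t G R v w)"
  by (simp add: head_def)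

lemma lowestD: "lowest_path s t G R v w \<Longrightarrow> w \<in> ipaths s t G v"
  "lowest_path s t G R v w \<Longrightarrow> n \<ge> 1 \<Longrightarrow> p \<in> paths s t G v n \<Longrightarrow> p \<noteq> pref w n \<Longrightarrow> dict R n (pref w n) p"
  unfolding lowest_path_def by blast+

lemma highestD: "highest_path s t G R v w \<Longrightarrow> w \<in> ipaths s t G v"
  "highest_path s t G R v w \<Longrightarrow> n \<ge> 1 \<Longrightarrow> p \<in> paths s t G v n \<Longrightarrow> p \<noteq> pref w n \<Longrightarrow> dict R n p (pref w n)"
  unfolding highest_path_def by blast+

lemma small_zero:
  fixes d C r :: real
  assumes "\<And>n. d \<le> C * r ^ n" "0 < r" "r < 1" "0 \<le> C"
  shows "d \<le> 0"
proof (rule ccontr)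
  assume "\<not> d \<le> 0"
  then have d: "d > 0" by simp
  obtain n where n: "r ^ n < d / (C + 1)" using real_arch_pow_inv[of "d / (C + 1)" r] d assms by auto
  have "r ^ n * (C + 1) < d" using n assms(4) by (simp add: pos_less_divide_eq)
  moreover have "C * r ^ n \<le> r ^ n * (C + 1)" using assms(2) by (simp add: algebra_simps)
  ultimately show False using assms(1)[of n] by linarith
qed

lemma lin_to_chain:
  assumes lin: "linear_gifs V G s t g E R"
  shows "chain_condition V G s t g E R"
  unfolding chain_condition_def
proof (intro ballI allI impI)
  fix i a b assume i: "i \<in> V" and adj: "adjacent R {e \<in> G. s e = i} a b"
  have ab: "a \<in> G" "b \<in> G" "s a = i" "s b = i" "R a b" using adj unfolding adjacent_def by auto
  have nb: "\<not> (R a c \<and> R c b)" if "c \<in> G" "s c = i" for c using adj that unfolding adjacent_def by blast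
  define wH where "wH = (THE w. highest_path s t G R (t a) w)"
  define wL where "wL = (THE w. lowest_path s t G R (t b) w)"
  have H: "highest_path s t G R (t a) wH" unfolding wH_def using highest_the edgeV ab by blast
  have L: "lowest_path s t G R (t b) wL" unfolding wL_def using lowest_the edgeV ab by blast
  have wHi: "wH \<in> ipaths s t G (t a)" using highestD(1)[OF H] .
  have wLi: "wL \<in> ipaths s t G (t b)" using lowestD(1)[OF L] .
  obtain r where r: "0 < r" "r < 1" "\<forall>e\<in>G. \<forall>x y. dist (g e x) (g e y) \<le> r * dist x y"
    using ratio by blast
  obtain D where D: "0 \<le> D" "\<forall>v\<in>V. \<forall>x\<in>E v. \<forall>y\<in>E v. dist x y \<le> D" using diamE by blast
  let ?X = "g a (proj g t E wH)" and ?Y = "g b (proj g t E wL)"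
  have bound: "dist ?X ?Y \<le> (2 * D * r) * r ^ m" if m: "m \<ge> 1" for m
  proof -
    let ?p = "a # pref wH m" and ?q = "b # pref wL m"
    have P: "?p \<in> paths s t G i (Suc m)" using ab pref_paths[OF wHi] by (simp add: paths_Cons)
    have Q: "?q \<in> paths s t G i (Suc m)" using ab pref_paths[OF wLi] by (simp add: paths_Cons)
    have dpq: "dict R (Suc m) ?p ?q" using ab by (simp add: dict_Cons)
    have nbr: "\<not> (dict R (Suc m) ?p rr \<and> dict R (Suc m) rr ?q)" if rr: "rr \<in> paths s t G i (Suc m)" for rr
    proof
      assume h: "dict R (Suc m) ?p rr \<and> dict R (Suc m) rr ?q"
      obtain c r' where rc: "rr = c # r'" using pathsD(1)[OF rr] by (cases rr) auto
      have c: "c \<in> G" "s c = i" "r' \<in> paths s t G (t c) m" using rr m unfolding rc by (auto simp: paths_Cons)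
      have h1: "R a c \<or> (a = c \<and> dict R m (pref wH m) r')" using h unfolding rc by (simp add: dict_Cons)
      have h2: "R c b \<or> (c = b \<and> dict R m r' (pref wL m))" using h unfolding rc by (simp add: dict_Cons)
      show False
      proof (cases "R a c")
        case True
        show False
        proof (cases "R c b")
          case True then show False using nb[OF c(1,2)] \<open>R a c\<close> by blast
        next
          case False
          then have "c = b" "dict R m r' (pref wL m)" using h2 by auto
          moreover have "r' \<noteq> pref wL m" using calculation(2) dict_irr by blast
          ultimately have "dict R m (pref wL m) r'" using lowestD(2)[OF L m] c(3) by simp
          then show False using \<open>dict R m r' (pref wL m)\<close> dict_asym by blast
        qed
      next
        case False
        then have ac: "a = c" "dict R m (pref wH m) r'" using h1 by auto
        show False
        proof (cases "R c b")
          case True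
          have "r' \<noteq> pref wH m" using ac(2) dict_irr by blast
          then have "dict R m r' (pref wH m)" using highestD(2)[OF H m] c(3) ac(1) by simp
          then show False using ac(2) dict_asym by blast
        next
          case False
          then have "c = b" using h2 by auto
          then show False using ab(5) ac(1) Rirr by simp
        qed
      qed
    qed
    have "adjacent (dict R (Suc m)) (paths s t G i (Suc m)) ?p ?q"
      unfolding adjacent_def using P Q dpq nbr by blast
    then have "cyl g t E ?p \<inter> cyl g t E ?q \<noteq> {}" using lin i unfolding linear_gifs_def by auto
    then obtain x where x: "x \<in> cyl g t E ?p" "x \<in> cyl g t E ?q" by blast
    have mne: "pref wH m \<noteq> []" "pref wL m \<noteq> []" using m by (auto simp: pref_def)
    have X: "?X \<in> cyl g t E ?p" using proj_in[OF wHi m] unfolding cyl_Cons[OF mne(1)] by blast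
    have Y: "?Y \<in> cyl g t E ?q" using proj_in[OF wLi m] unfolding cyl_Cons[OF mne(2)] by blast
    have "dist ?X x \<le> r ^ Suc m * D" by (rule cyl_diam[OF r(1) r(3) D(2) P _ X x(1)]) simp
    moreover have "dist x ?Y \<le> r ^ Suc m * D" by (rule cyl_diam[OF r(1) r(3) D(2) Q _ x(2) Y]) simp
    ultimately have "dist ?X ?Y \<le> 2 * (r ^ Suc m * D)" using dist_triangle[of ?X ?Y x] by linarith
    then show ?thesis by (simp add: algebra_simps)
  qed
  have "dist ?X ?Y \<le> 0"
  proof (rule small_zero[OF _ r(1,2)])
    show "dist ?X ?Y \<le> (2 * D * r * r) * r ^ n" for n
      using bound[of "Suc n"] by (simp add: algebra_simps)
    show "0 \<le> 2 * D * r * r" using D(1) r(1) by simp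
  qed
  then have "?X = ?Y" by simp
  then show "g a (tail G s t g E R (t a)) = g b (head G s t g E R (t b))"
    unfolding tail_eq head_eq wH_def[symmetric] wL_def[symmetric] .
qed


lemma mkpath:
  assumes p: "p \<in> paths s t G i k" and l: "l < k" and c: "c \<in> G" "s c = s (p ! l)"
    and x: "length x = k - Suc l" "k - Suc l > 0 \<Longrightarrow> x \<in> paths s t G (t c) (k - Suc l)"
  shows "take l p @ c # x \<in> paths s t G i k"
proof -
  note D = pathsD[OF p]
  have cx: "c # x \<in> paths s t G (s c) (Suc (k - Suc l))" using c x by (simp add: paths_Cons)
  show ?thesis
  proof (cases l)
    case 0
    have "p \<noteq> []" using D(1) l by auto
    then have "s (p ! 0) = i" using D(3) l by (simp add: hd_conv_nth)
    then show ?thesis using cx 0 c l by simp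
  next
    case (Suc j)
    have tp: "take l p \<in> paths s t G i l" using take_paths[OF p] l by simp
    have "j < length p" using Suc l D(1) by simp
    then have "last (take l p) = p ! j" using Suc by (simp add: take_Suc_conv_app_nth)
    moreover have "t (p ! j) = s (p ! l)" using D(4)[of j] Suc l by simp
    ultimately have "t (last (take l p)) = s c" using c by simp
    from paths_append[OF tp cx _ _ this] have "take l p @ c # x \<in> paths s t G i (l + Suc (k - Suc l))"
      using Suc by simp
    then show ?thesis using l by simp
  qed
qed

lemma pt_in:
  assumes w: "w \<in> ipaths s t G (t a)" and a: "a \<in> G"
  shows "gcomp g u (g a (proj g t E w)) \<in> cyl g t E (u @ a # pref w m)"
proof -
  have "g a (proj g t E w) \<in> cyl g t E (a # pref w m)"
  proof (cases m)
    case 0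
    then show ?thesis using proj_E[OF w] by (simp add: cyl_def pref_def)
  next
    case (Suc m')
    then have ne: "pref w m \<noteq> []" by (simp add: pref_def)
    show ?thesis unfolding cyl_Cons[OF ne] using proj_in[OF w] Suc by simp
  qed
  then show ?thesis unfolding cyl_append[of "a # pref w m" u, simplified] by simp
qed

lemma chain_to_lin:
  assumes ch: "chain_condition V G s t g E R"
  shows "linear_gifs V G s t g E R"
  unfolding linear_gifs_def
proof (intro ballI allI impI)
  fix i k p q assume i: "i \<in> V" and k: "k \<ge> 1" and adj: "adjacent (dict R k) (paths s t G i k) p q"
  have P: "p \<in> paths s t G i k" and Q: "q \<in> paths s t G i k" and dpq: "dict R k p q"
    using adj unfolding adjacent_def by auto
  have nb: "\<not> (dict R k p rr \<and> dict R k rr q)" if "rr \<in> paths s t G i k" for rr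
    using adj that unfolding adjacent_def by blast
  obtain l where l: "l < k" "take l p = take l q" "R (p ! l) (q ! l)" using dpq unfolding dict_def by blast
  define u where "u = take l p"
  define a where "a = p ! l"
  define b where "b = q ! l"
  define m where "m = k - Suc l"
  define p' where "p' = drop (Suc l) p"
  define q' where "q' = drop (Suc l) q"
  note DP = pathsD[OF P] and DQ = pathsD[OF Q]
  have pdec: "p = u @ a # p'" unfolding u_def a_def p'_def using l(1) DP(1) by (simp add: id_take_nth_drop)
  have qdec: "q = u @ b # q'" unfolding u_def b_def q'_def l(2) using l(1) DQ(1) by (simp add: id_take_nth_drop)
  have lu: "length u = l" unfolding u_def using l(1) DP(1) by simp
  have lp': "length p' = m" "length q' = m" unfolding p'_def q'_def m_def using DP(1) DQ(1) by simp_all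
  have km: "k = length u + Suc m" using lu l(1) unfolding m_def by simp
  have ab: "a \<in> G" "b \<in> G" "s a = s b" "R a b" using RD[OF l(3)] l(3) unfolding a_def b_def by auto
  have sb: "s b = s (p ! l)" using ab unfolding a_def by simp
  have p'P: "p' \<in> paths s t G (t a) m" if "m > 0"
  proof -
    have "Suc l < k" using that unfolding m_def by simp
    then have "t (p ! l) = s (p ! Suc l)" using DP(4) by blast
    then show ?thesis using drop_paths[OF P \<open>Suc l < k\<close>] unfolding p'_def m_def a_def by simp
  qed
  have q'P: "q' \<in> paths s t G (t b) m" if "m > 0"
  proof -
    have "Suc l < k" using that unfolding m_def by simp
    then have "t (q ! l) = s (q ! Suc l)" using DQ(4) by blast
    then show ?thesis using drop_paths[OF Q \<open>Suc l < k\<close>] unfolding q'_def m_def b_def by simp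
  qed
  have dict_u: "dict R k (u @ x) (u @ y) \<longleftrightarrow> dict R (Suc m) x y" for x y
    using dict_append[of u "Suc m" x y] km by simp
  have adjab: "adjacent R {e \<in> G. s e = s a} a b"
    unfolding adjacent_def
  proof (intro conjI)
    show "a \<in> {e \<in> G. s e = s a}" "b \<in> {e \<in> G. s e = s a}" "R a b" using ab by auto
    show "\<not> (\<exists>c\<in>{e \<in> G. s e = s a}. R a c \<and> R c b)"
    proof
      assume "\<exists>c\<in>{e \<in> G. s e = s a}. R a c \<and> R c b"
      then obtain c where c: "c \<in> G" "s c = s a" "R a c" "R c b" by blast
      have tc: "t c \<in> V" using edgeV c(1) by blast
      define wX where "wX = (THE w. lowest_path s t G R (t c) w)"
      have wXi: "wX \<in> ipaths s t G (t c)" using lowestD(1)[OF lowest_the[OF tc]] unfolding wX_def .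
      have rP: "u @ c # pref wX m \<in> paths s t G i k"
        unfolding u_def using mkpath[OF P l(1) c(1)] c(2) pref_paths[OF wXi] unfolding a_def m_def by simp
      have "dict R k p (u @ c # pref wX m)" unfolding pdec dict_u using c by (simp add: dict_Cons)
      moreover have "dict R k (u @ c # pref wX m) q" unfolding qdec dict_u using c by (simp add: dict_Cons)
      ultimately show False using nb[OF rP] by blast
    qed
  qed
  have sa: "s a \<in> V" using edgeV ab(1) by blast
  have chn: "g a (tail G s t g E R (t a)) = g b (head G s t g E R (t b))"
    using ch sa adjab unfolding chain_condition_def by blast
  define wH where "wH = (THE w. highest_path s t G R (t a) w)"
  define wL where "wL = (THE w. lowest_path s t G R (t b) w)"
  have H: "highest_path s t G R (t a) wH" unfolding wH_def using highest_the edgeV ab by blast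
  have L: "lowest_path s t G R (t b) wL" unfolding wL_def using lowest_the edgeV ab by blast
  have wHi: "wH \<in> ipaths s t G (t a)" using highestD(1)[OF H] .
  have wLi: "wL \<in> ipaths s t G (t b)" using lowestD(1)[OF L] .
  have p'eq: "p' = pref wH m"
  proof (cases "m = 0")
    case True then show ?thesis using lp' by (simp add: pref_def)
  next
    case False
    show ?thesis
    proof (rule ccontr)
      assume ne: "p' \<noteq> pref wH m"
      have "dict R m p' (pref wH m)" using highestD(2)[OF H _ p'P ne] False by simp
      have rP: "u @ a # pref wH m \<in> paths s t G i k"
        unfolding u_def using mkpath[OF P l(1) ab(1)] pref_paths[OF wHi] unfolding a_def m_def by simp
      have "dict R k p (u @ a # pref wH m)" unfolding pdec dict_u
        using \<open>dict R m p' (pref wH m)\<close> by (simp add: dict_Cons)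
      moreover have "dict R k (u @ a # pref wH m) q" unfolding qdec dict_u using ab by (simp add: dict_Cons)
      ultimately show False using nb[OF rP] by blast
    qed
  qed
  have q'eq: "q' = pref wL m"
  proof (cases "m = 0")
    case True then show ?thesis using lp' by (simp add: pref_def)
  next
    case False
    show ?thesis
    proof (rule ccontr)
      assume ne: "q' \<noteq> pref wL m"
      have "dict R m (pref wL m) q'" using lowestD(2)[OF L _ q'P ne] False by simp
      have rP: "u @ b # pref wL m \<in> paths s t G i k"
        unfolding u_def using mkpath[OF P l(1) ab(2) sb] pref_paths[OF wLi] unfolding m_def by simp
      have "dict R k p (u @ b # pref wL m)" unfolding pdec dict_u using ab by (simp add: dict_Cons)
      moreover have "dict R k (u @ b # pref wL m) q" unfolding qdec dict_u
        using \<open>dict R m (pref wL m) q'\<close> by (simp add: dict_Cons)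
      ultimately show False using nb[OF rP] by blast
    qed
  qed
  have "gcomp g u (g a (proj g t E wH)) \<in> cyl g t E p" unfolding pdec p'eq using pt_in[OF wHi ab(1)] .
  moreover have "gcomp g u (g b (proj g t E wL)) \<in> cyl g t E q" unfolding qdec q'eq using pt_in[OF wLi ab(2)] .
  moreover have "g a (proj g t E wH) = g b (proj g t E wL)"
    using chn unfolding tail_eq head_eq wH_def[symmetric] wL_def[symmetric] .
  ultimately show "cyl g t E p \<inter> cyl g t E q \<noteq> {}" by auto
qed

end

theorem theorem1p2:
  fixes V :: "'v set" and G :: "'e set" and s t :: "'e \<Rightarrow> 'v"
    and g :: "'e \<Rightarrow> 'a::euclidean_space \<Rightarrow> 'a" and E :: "'v \<Rightarrow> 'a set"
    and prec :: "'e \<Rightarrow> 'e \<Rightarrow> bool"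
  assumes "gifs V G s t g"
    and "invariant_sets V G s t g E"
    and "ordered V G s prec"
  shows "linear_gifs V G s t g E prec \<longleftrightarrow> chain_condition V G s t g E prec"
proof -
  interpret gord V G s t g E prec
    using assms by (simp add: gord_def gord_axioms_def gctx_def)
  show ?thesis using lin_to_chain chain_to_lin by blast
qed

end
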